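(* Let $n\ge1$ be an integer and let $c_0,g_2,g_3$ be arbitrary constants. Let $C(p)=-n(n+1)p+c_0$ and let $A(p)=\sum_{i=0}^{n}a_ip^i$ be a polynomial with $a_n=1$. Then $A$ satisfies the polynomial identity $$(4p^{3}-g_2p-g_3)A'''(p)+\left(18p^{2}-\tfrac{3g_2}{2}\right)A''(p)+4(3p+C(p))A'(p)+2A(p)C'(p)=0$$ if and only if its coefficients are given by $$a_{n-1}=\frac{c_0}{2n-1},\qquad a_{n-2}=\frac{\left(8c_0^{2}-ng_2(2n-1)^{2}\right)(n-1)}{8(2n-3)(2n-1)^{2}}\ \ (\text{for } n\ge2),$$ and, for $i=n-3,n-4,\ldots,0$, $$a_i=\frac{\left((2i^{2}+10i+12)a_{i+3}g_3+(2i^{2}+7i+6)a_{i+2}g_2-8c_0a_{i+1}\right)(i+1)}{4(i+n+1)(2i+1)(i-n)}.$$ In particular, for all values of $c_0,g_2,g_3$, the function $z(x)=A(\wp(x))$ is a solution of the Lie equation $z'''+4wz'+2w'z=0$ for the potential $w(x)=-n(n+1)\wp(x)+c_0$, where $\wp$ is the Weierstrass function with invariants $g_2,g_3$.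
   Context: The Weierstrass function $\wp(x)$ satisfies $(\wp')^2=4\wp^3-g_2\wp-g_3$ with invariants $g_2,g_3$. For a potential $w(x)=C(\wp(x))$ and a candidate symmetry $z(x)=A(\wp(x))$ with $C,A$ polynomials, substituting into the Lie equation $z'''+4wz'+2w'z=0$ and using the Weierstrass ODE, the Lie equation becomes $\wp'(x)$ times the displayed polynomial expression evaluated at $p=\wp(x)$; so $z$ is a symmetry exactly when the displayed polynomial identity in $p$ holds. *)

theory Defs
  imports "HOL-Analysis.Analysis" "HOL-Computational_Algebra.Polynomial"
begin

definition potC :: "nat \<Rightarrow> complex \<Rightarrow> complex poly" where
  "potC n c0 = [: c0, - (of_nat n * (of_nat n + 1)) :]"

definition lie_expr :: "complex \<Rightarrow> complex \<Rightarrow> complex poly \<Rightarrow> complex poly \<Rightarrow> complex \<Rightarrow> complex" where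
  "lie_expr g2 g3 C A p =
     (4 * p ^ 3 - g2 * p - g3) * poly (pderiv (pderiv (pderiv A))) p
   + (18 * p ^ 2 - 3 * g2 / 2) * poly (pderiv (pderiv A)) p
   + 4 * (3 * p + poly C p) * poly (pderiv A) p
   + 2 * poly A p * poly (pderiv C) p"

end

theory Submission
  imports Defs "HOL-Complex_Analysis.Cauchy_Integral_Formula"
begin

definition Ek :: "nat \<Rightarrow> complex \<Rightarrow> complex \<Rightarrow> complex \<Rightarrow> complex poly \<Rightarrow> nat \<Rightarrow> complex" where
 "Ek n c0 g2 g3 A k = 2*(2* of_nat k+1)*(of_nat k - of_nat n)*(of_nat k + of_nat n + 1)*coeff A k
   + 4*c0*(of_nat k+1)*coeff A (k+1)
   - g2*(of_nat k+1)*(of_nat k+2)*(2* of_nat k+3)/2*coeff A (k+2)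
   - g3*(of_nat k+1)*(of_nat k+2)*(of_nat k+3)*coeff A (k+3)"

definition LP :: "nat \<Rightarrow> complex \<Rightarrow> complex \<Rightarrow> complex \<Rightarrow> complex poly \<Rightarrow> complex poly" where
 "LP n c0 g2 g3 A = (let A1 = pderiv A; A2 = pderiv A1; A3 = pderiv A2 in
    smult 4 (pCons 0 (pCons 0 (pCons 0 A3))) - smult g2 (pCons 0 A3) - smult g3 A3
  + smult 18 (pCons 0 (pCons 0 A2)) - smult (3*g2/2) A2
  + smult (12 - 4* of_nat n*(of_nat n+1)) (pCons 0 A1) + smult (4*c0) A1
  + smult (-2* of_nat n*(of_nat n+1)) A)"

lemma poly_LP: "poly (LP n c0 g2 g3 A) p = lie_expr g2 g3 (potC n c0) A p"
  unfolding LP_def lie_expr_def potC_def Let_def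
  by (simp add: pderiv_pCons algebra_simps power3_eq_cube power2_eq_square)

lemma coeff_LP: "coeff (LP n c0 g2 g3 A) k = Ek n c0 g2 g3 A k"
proof -
  consider "k = 0" | "k = 1" | "k = 2" | j where "k = Suc (Suc (Suc j))"
    by (metis One_nat_def Suc_1 not0_implies_Suc)
  then show ?thesis
  proof cases
    case 1 then show ?thesis unfolding LP_def Ek_def Let_def
      by (simp add: coeff_pderiv field_simps eval_nat_numeral)
  next
    case 2 then show ?thesis unfolding LP_def Ek_def Let_def
      by (simp add: coeff_pderiv field_simps eval_nat_numeral)
  next
    case 3 then show ?thesis unfolding LP_def Ek_def Let_def
      by (simp add: coeff_pderiv field_simps eval_nat_numeral)
  next
    case 4 then show ?thesis unfolding LP_def Ek_def Let_def
      by (simp add: coeff_pderiv field_simps eval_nat_numeral)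
  qed
qed

lemma part1: "(\<forall>p. lie_expr g2 g3 (potC n c0) A p = 0) \<longleftrightarrow> (\<forall>k. Ek n c0 g2 g3 A k = 0)"
proof -
  have "(\<forall>p. lie_expr g2 g3 (potC n c0) A p = 0) \<longleftrightarrow> LP n c0 g2 g3 A = 0"
    using poly_all_0_iff_0[of "LP n c0 g2 g3 A"] by (simp add: poly_LP)
  also have "\<dots> \<longleftrightarrow> (\<forall>k. Ek n c0 g2 g3 A k = 0)"
    by (metis coeff_LP coeff_0 poly_eqI)
  finally show ?thesis .
qed

lemma Ek_top:
  assumes "degree A = n" "coeff A n = 1" "n \<le> k"
  shows "Ek n c0 g2 g3 A k = 0"
proof -
  have z: "\<And>j. j > n \<Longrightarrow> coeff A j = 0" using assms(1) by (simp add: coeff_eq_0)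
  show ?thesis
  proof (cases "k = n")
    case True then show ?thesis unfolding Ek_def using z by simp
  next
    case False then show ?thesis unfolding Ek_def using z assms(3) by simp
  qed
qed

lemma Ek_n1:
  assumes "degree A = Suc m" "coeff A (Suc m) = 1"
  shows "Ek (Suc m) c0 g2 g3 A m = 0 \<longleftrightarrow> coeff A m = c0 / (2 * of_nat (Suc m) - 1)"
proof -
  have z: "\<And>j. j > Suc m \<Longrightarrow> coeff A j = 0" using assms(1) by (simp add: coeff_eq_0)
  have e: "Ek (Suc m) c0 g2 g3 A m = 4 * (of_nat m + 1) * (c0 - (2 * of_nat m + 1) * coeff A m)"
    unfolding Ek_def using z assms(2) by (simp add: algebra_simps)
  have nz: "(2 * of_nat m + 1 :: complex) \<noteq> 0"
    by (metis of_nat_Suc of_nat_mult of_nat_numeral of_nat_eq_0_iff nat.distinct(1) add.commute)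
  have nz2: "(of_nat m + 1 :: complex) \<noteq> 0"
    by (metis of_nat_Suc of_nat_eq_0_iff nat.distinct(1) add.commute)
  have d: "(2 * of_nat (Suc m) - 1 :: complex) = 2 * of_nat m + 1" by simp
  have "Ek (Suc m) c0 g2 g3 A m = 0 \<longleftrightarrow> c0 = (2 * of_nat m + 1) * coeff A m"
    using nz2 by (metis e mult_eq_0_iff right_minus_eq zero_neq_numeral)
  also have "\<dots> \<longleftrightarrow> coeff A m = c0 / (2 * of_nat m + 1)"
    using nz by (auto simp: field_simps)
  finally show ?thesis unfolding d .
qed

lemma lin_iff:
  fixes D a R X :: complex
  assumes "D \<noteq> 0" "X * D = - R"
  shows "D * a + R = 0 \<longleftrightarrow> a = X"
proof -
  have "D * a + R = 0 \<longleftrightarrow> D * a = - R" by (simp add: eq_neg_iff_add_eq_0)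
  also have "\<dots> \<longleftrightarrow> a * D = X * D" using assms(2) by (simp add: mult.commute)
  also have "\<dots> \<longleftrightarrow> a = X" using assms(1) by simp
  finally show ?thesis .
qed

lemma aux_cancel: "(v::complex) \<noteq> 0 \<Longrightarrow> (x * (c / v)) * (2 * v) = 2 * x * c"
  by (simp add: field_simps)

lemma Ek_n2:
  assumes "degree A = Suc (Suc m)" "coeff A (Suc (Suc m)) = 1"
    and h1: "coeff A (Suc m) = c0 / (2 * of_nat (Suc (Suc m)) - 1)"
  shows "Ek (Suc (Suc m)) c0 g2 g3 A m = 0 \<longleftrightarrow> coeff A m =
                 ((8 * c0 ^ 2 - of_nat (Suc (Suc m)) * g2 * (2 * of_nat (Suc (Suc m)) - 1) ^ 2) * (of_nat (Suc (Suc m)) - 1))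
                 / (8 * (2 * of_nat (Suc (Suc m)) - 3) * (2 * of_nat (Suc (Suc m)) - 1) ^ 2)"
proof -
  have z: "\<And>j. j > Suc (Suc m) \<Longrightarrow> coeff A j = 0" using assms(1) by (simp add: coeff_eq_0)
  have nz: "(2 * of_nat m + 3 :: complex) \<noteq> 0"
    using of_nat_eq_0_iff[of "2*m+3", where 'a=complex] by (simp add: add_ac)
  have nz1: "(2 * of_nat m + 1 :: complex) \<noteq> 0"
    using of_nat_eq_0_iff[of "2*m+1", where 'a=complex] by (simp add: add_ac)
  have d: "(2 * of_nat (Suc (Suc m)) - 1 :: complex) = 2 * of_nat m + 3" by simp
  have d3: "(2 * of_nat (Suc (Suc m)) - 3 :: complex) = 2 * of_nat m + 1" by simp
  have d2: "(of_nat (Suc (Suc m)) - 1 :: complex) = of_nat m + 1" by simp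
  have h1': "coeff A (Suc m) = c0 / (2 * of_nat m + 3)" using h1 d by simp
  have e: "Ek (Suc (Suc m)) c0 g2 g3 A m = (2 * (2 * of_nat m+1)*(-2)*(2 * of_nat m+3)) * coeff A m
       + (4*c0*(of_nat m+1)*(c0 / (2 * of_nat m + 3)) - g2*(of_nat m+1)*(of_nat m+2)*(2 * of_nat m+3)/2)"
    unfolding Ek_def using z assms(2) h1' by (simp add: algebra_simps)
  define M :: complex where "M = (8 * c0 ^ 2 - of_nat (Suc (Suc m)) * g2 * (2 * of_nat m + 3) ^ 2) * (of_nat m + 1)"
  define Q :: complex where "Q = 8 * (2 * of_nat m + 1) * (2 * of_nat m + 3) ^ 2"
  have Q: "Q \<noteq> 0" unfolding Q_def using nz nz1 by (metis mult_eq_0_iff power_eq_0_iff zero_neq_numeral)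
  have k: "Ek (Suc (Suc m)) c0 g2 g3 A m * (2 * (2 * of_nat m + 3)) = M - Q * coeff A m"
  proof -
    let ?v = "2 * of_nat m + 3 :: complex"
    have k1: "(4*c0*(of_nat m+1)*(c0 / ?v)) * (2 * ?v) = 8*c0^2*(of_nat m+1)"
      using aux_cancel[OF nz, of "4*c0*(of_nat m+1)" c0] by (simp add: power2_eq_square)
    have k2: "(g2*(of_nat m+1)*(of_nat m+2)*?v/2) * (2 * ?v) = g2*(of_nat m+1)*(of_nat m+2)*?v^2"
      by (simp add: power2_eq_square)
    have "Ek (Suc (Suc m)) c0 g2 g3 A m * (2 * ?v) = (2 * (2 * of_nat m+1)*(-2)*?v) * coeff A m * (2 * ?v)
       + (4*c0*(of_nat m+1)*(c0 / ?v)) * (2 * ?v) - (g2*(of_nat m+1)*(of_nat m+2)*?v/2) * (2 * ?v)"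
      unfolding e by (simp only: left_diff_distrib distrib_right add_diff_eq)
    also have "\<dots> = M - Q * coeff A m" unfolding k1 k2 M_def Q_def
      by (simp add: algebra_simps power2_eq_square)
    finally show ?thesis .
  qed
  have "Ek (Suc (Suc m)) c0 g2 g3 A m = 0 \<longleftrightarrow> M - Q * coeff A m = 0"
    using k nz by (metis mult_eq_0_iff zero_neq_numeral)
  also have "\<dots> \<longleftrightarrow> coeff A m = M / Q" using Q by (auto simp: eq_divide_eq algebra_simps)
  finally show ?thesis unfolding d d3 d2 M_def Q_def .
qed

lemma Ek_rec:
  assumes "i + 3 \<le> n"
  shows "Ek n c0 g2 g3 A i = 0 \<longleftrightarrow> coeff A i =
                 (((2 * of_nat i ^ 2 + 10 * of_nat i + 12) * coeff A (i + 3) * g3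
                   + (2 * of_nat i ^ 2 + 7 * of_nat i + 6) * coeff A (i + 2) * g2
                   - 8 * c0 * coeff A (i + 1)) * (of_nat i + 1))
                 / (4 * (of_nat i + of_nat n + 1) * (2 * of_nat i + 1) * (of_nat i - of_nat n))"
proof -
  have nz1: "(2 * of_nat i + 1 :: complex) \<noteq> 0"
    using of_nat_eq_0_iff[of "2*i+1", where 'a=complex] by (simp add: add_ac)
  have nz2: "(of_nat i + of_nat n + 1 :: complex) \<noteq> 0"
    using of_nat_eq_0_iff[of "i+n+1", where 'a=complex] by (simp add: add_ac)
  have nz3: "(of_nat i - of_nat n :: complex) \<noteq> 0" using assms by simp
  have e: "Ek n c0 g2 g3 A i = (2*(2 * of_nat i+1)*(of_nat i - of_nat n)*(of_nat i + of_nat n + 1))*coeff A i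
   + (4*c0*(of_nat i+1)*coeff A (i+1)
   - g2*(of_nat i+1)*(of_nat i+2)*(2 * of_nat i+3)/2*coeff A (i+2)
   - g3*(of_nat i+1)*(of_nat i+2)*(of_nat i+3)*coeff A (i+3))"
    unfolding Ek_def by (simp add: algebra_simps)
  define N :: complex where "N = ((2 * of_nat i ^ 2 + 10 * of_nat i + 12) * coeff A (i + 3) * g3
                   + (2 * of_nat i ^ 2 + 7 * of_nat i + 6) * coeff A (i + 2) * g2
                   - 8 * c0 * coeff A (i + 1)) * (of_nat i + 1)"
  define Q :: complex where "Q = 4 * (of_nat i + of_nat n + 1) * (2 * of_nat i + 1) * (of_nat i - of_nat n)"
  have Q: "Q \<noteq> 0" unfolding Q_def using nz1 nz2 nz3 by (metis mult_eq_0_iff zero_neq_numeral)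
  have k: "Ek n c0 g2 g3 A i * 2 = Q * coeff A i - N"
    unfolding e N_def Q_def by (simp add: field_simps) (simp add: algebra_simps power2_eq_square)
  have "Ek n c0 g2 g3 A i = 0 \<longleftrightarrow> Q * coeff A i - N = 0"
    using k by (metis mult_eq_0_iff zero_neq_numeral)
  also have "\<dots> \<longleftrightarrow> coeff A i = N / Q" using Q by (auto simp: eq_divide_eq algebra_simps)
  finally show ?thesis unfolding N_def Q_def .
qed
lemma deriv_open_eq:
  assumes "open S" "x \<in> S" "\<And>y. y \<in> S \<Longrightarrow> g y = h y"
  shows "deriv g x = deriv h x"
proof (rule deriv_cong_ev[OF _ refl])
  show "\<forall>\<^sub>F y in nhds x. g y = h y"
    using eventually_nhds_in_open[OF assms(1,2)] by (rule eventually_mono) (rule assms(3))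
qed

lemma chain_poly:
  assumes "(f has_field_derivative D) (at y)"
  shows "((\<lambda>y. poly P (f y)) has_field_derivative poly (pderiv P) (f y) * D) (at y)"
  by (rule DERIV_chain2[OF poly_DERIV assms])

lemma alg2:
  fixes s q g2 g3 a1 a2 a3 a0 c c1 :: complex
  assumes "s * s = 4 * q ^ 3 - g2 * q - g3"
  shows "((((a3 * s) * s + (6 * q ^ 2 - g2 / 2) * a2) * s + (6 * q ^ 2 - g2 / 2) * (a2 * s))
       + ((12 * q * s) * a1 + (a2 * s) * (6 * q ^ 2 - g2 / 2)))
    + 4 * c * (a1 * s) + 2 * (c1 * s) * a0
   = s * ((4 * q ^ 3 - g2 * q - g3) * a3 + (18 * q ^ 2 - 3 * g2 / 2) * a2 + 4 * (3 * q + c) * a1 + 2 * a0 * c1)"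
proof -
  define g where "g = 6 * q ^ 2 - g2 / 2"
  have e: "18 * q ^ 2 - 3 * g2 / 2 = 3 * g" unfolding g_def by simp
  have "((((a3 * s) * s + g * a2) * s + g * (a2 * s))
       + ((12 * q * s) * a1 + (a2 * s) * g))
    + 4 * c * (a1 * s) + 2 * (c1 * s) * a0
   = s * ((s * s) * a3 + 3 * g * a2 + 4 * (3 * q + c) * a1 + 2 * a0 * c1)"
    by (simp add: algebra_simps)
  then show ?thesis unfolding e assms g_def[symmetric] .
qed
lemma part3:
  fixes C A :: "complex poly" and wp :: "complex \<Rightarrow> complex"
  assumes L: "\<forall>p. lie_expr g2 g3 C A p = 0"
    and S: "open S" and hol: "wp holomorphic_on S"
    and o1: "\<forall>x\<in>S. (deriv wp x) ^ 2 = 4 * wp x ^ 3 - g2 * wp x - g3"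
    and o2: "\<forall>x\<in>S. deriv (deriv wp) x = 6 * wp x ^ 2 - g2 / 2"
    and x: "x \<in> S"
  shows "deriv (deriv (deriv (\<lambda>y. poly A (wp y)))) x
                    + 4 * poly C (wp x) * deriv (\<lambda>y. poly A (wp y)) x
                    + 2 * deriv (\<lambda>y. poly C (wp y)) x * poly A (wp x) = 0"
proof -
  define f1 where "f1 = deriv wp"
  define G :: "complex poly" where "G = [: - g2 / 2, 0, 6 :]"
  have pG: "\<And>q. poly G q = 6 * q ^ 2 - g2 / 2" unfolding G_def by (simp add: power2_eq_square algebra_simps)
  have pG': "\<And>q. poly (pderiv G) q = 12 * q" unfolding G_def by (simp add: pderiv_pCons)
  have df: "\<And>y. y \<in> S \<Longrightarrow> (wp has_field_derivative f1 y) (at y)"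
    unfolding f1_def by (rule holomorphic_derivI[OF hol S])
  have hol1: "f1 holomorphic_on S" unfolding f1_def using holomorphic_deriv[OF hol S] .
  have df1: "(f1 has_field_derivative poly G (wp y)) (at y)" if y: "y \<in> S" for y
  proof -
    have "(f1 has_field_derivative deriv f1 y) (at y)" using holomorphic_derivI[OF hol1 S y] .
    moreover have "deriv f1 y = poly G (wp y)" unfolding f1_def pG using o2 y by simp
    ultimately show ?thesis by simp
  qed
  have dP: "\<And>P y. y \<in> S \<Longrightarrow> ((\<lambda>y. poly P (wp y)) has_field_derivative poly (pderiv P) (wp y) * f1 y) (at y)"
    by (rule chain_poly[OF df])
  define h1 where "h1 = (\<lambda>y. poly (pderiv A) (wp y) * f1 y)"
  define h2 where "h2 = (\<lambda>y. poly (pderiv (pderiv A)) (wp y) * f1 y * f1 y + poly G (wp y) * poly (pderiv A) (wp y))"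
  have e1: "\<And>y. y \<in> S \<Longrightarrow> deriv (\<lambda>y. poly A (wp y)) y = h1 y"
    unfolding h1_def by (rule DERIV_imp_deriv[OF dP])
  have e2: "\<And>y. y \<in> S \<Longrightarrow> deriv (deriv (\<lambda>y. poly A (wp y))) y = h2 y"
  proof -
    fix y assume y: "y \<in> S"
    have "deriv (deriv (\<lambda>y. poly A (wp y))) y = deriv h1 y"
      using deriv_open_eq[OF S y e1] .
    also have "\<dots> = poly (pderiv (pderiv A)) (wp y) * f1 y * f1 y + poly G (wp y) * poly (pderiv A) (wp y)"
      unfolding h1_def by (rule DERIV_imp_deriv[OF DERIV_mult[OF dP[OF y] df1[OF y]]])
    finally show "deriv (deriv (\<lambda>y. poly A (wp y))) y = h2 y" unfolding h2_def .
  qed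
  have e3: "deriv (deriv (deriv (\<lambda>y. poly A (wp y)))) x =
     ((poly (pderiv (pderiv (pderiv A))) (wp x) * f1 x * f1 x + poly G (wp x) * poly (pderiv (pderiv A)) (wp x)) * f1 x
        + poly G (wp x) * (poly (pderiv (pderiv A)) (wp x) * f1 x))
     + (poly (pderiv G) (wp x) * f1 x * poly (pderiv A) (wp x) + poly (pderiv (pderiv A)) (wp x) * f1 x * poly G (wp x))"
  proof -
    have "deriv (deriv (deriv (\<lambda>y. poly A (wp y)))) x = deriv h2 x"
      using deriv_open_eq[OF S x e2] .
    also have "\<dots> = ((poly (pderiv (pderiv (pderiv A))) (wp x) * f1 x * f1 x + poly G (wp x) * poly (pderiv (pderiv A)) (wp x)) * f1 x
        + poly G (wp x) * (poly (pderiv (pderiv A)) (wp x) * f1 x))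
     + (poly (pderiv G) (wp x) * f1 x * poly (pderiv A) (wp x) + poly (pderiv (pderiv A)) (wp x) * f1 x * poly G (wp x))"
      unfolding h2_def
      by (rule DERIV_imp_deriv[OF DERIV_add[OF DERIV_mult[OF DERIV_mult[OF dP[OF x] df1[OF x]] df1[OF x]]
                                                DERIV_mult[OF dP[OF x] dP[OF x]]]])
    finally show ?thesis .
  qed
  have eC: "deriv (\<lambda>y. poly C (wp y)) x = poly (pderiv C) (wp x) * f1 x"
    by (rule DERIV_imp_deriv[OF dP[OF x]])
  have ss: "f1 x * f1 x = 4 * wp x ^ 3 - g2 * wp x - g3" using o1 x unfolding f1_def by (simp add: power2_eq_square)
  have "deriv (deriv (deriv (\<lambda>y. poly A (wp y)))) x
                    + 4 * poly C (wp x) * deriv (\<lambda>y. poly A (wp y)) x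
                    + 2 * deriv (\<lambda>y. poly C (wp y)) x * poly A (wp x)
     = f1 x * lie_expr g2 g3 C A (wp x)"
    unfolding e3 eC e1[OF x] h1_def lie_expr_def pG pG'
    by (rule alg2[OF ss])
  then show ?thesis using L by simp
qed

lemma part2:
  fixes n :: nat and c0 g2 g3 :: complex and A :: "complex poly"
  assumes n1: "n \<ge> 1" and dA: "degree A = n" and cA: "coeff A n = 1"
  shows "(\<forall>k. Ek n c0 g2 g3 A k = 0) \<longleftrightarrow>
           (coeff A (n - 1) = c0 / (2 * of_nat n - 1)
            \<and> (n \<ge> 2 \<longrightarrow> coeff A (n - 2) =
                 ((8 * c0 ^ 2 - of_nat n * g2 * (2 * of_nat n - 1) ^ 2) * (of_nat n - 1))
                 / (8 * (2 * of_nat n - 3) * (2 * of_nat n - 1) ^ 2))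
            \<and> (\<forall>i. i + 3 \<le> n \<longrightarrow> coeff A i =
                 (((2 * of_nat i ^ 2 + 10 * of_nat i + 12) * coeff A (i + 3) * g3
                   + (2 * of_nat i ^ 2 + 7 * of_nat i + 6) * coeff A (i + 2) * g2
                   - 8 * c0 * coeff A (i + 1)) * (of_nat i + 1))
                 / (4 * (of_nat i + of_nat n + 1) * (2 * of_nat i + 1) * (of_nat i - of_nat n))))"
    (is "?L \<longleftrightarrow> ?c1 \<and> ?c2 \<and> ?c3")
proof
  assume H: ?L
  obtain m where m: "n = Suc m" using n1 by (cases n) auto
  have c1: ?c1 using Ek_n1[of A m c0 g2 g3] H dA cA m by simp
  moreover have ?c2
  proof
    assume "n \<ge> 2"
    then have "n = Suc (Suc (n - 2))" by simp
    then obtain m' where m': "n = Suc (Suc m')" by blast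
    have "coeff A (Suc m') = c0 / (2 * of_nat (Suc (Suc m')) - 1)" using c1 m' by simp
    from Ek_n2[of A m' c0 g2 g3, OF _ _ this] H dA cA m'
    show "coeff A (n - 2) =
                 ((8 * c0 ^ 2 - of_nat n * g2 * (2 * of_nat n - 1) ^ 2) * (of_nat n - 1))
                 / (8 * (2 * of_nat n - 3) * (2 * of_nat n - 1) ^ 2)" by simp
  qed
  moreover have ?c3 using Ek_rec H by blast
  ultimately show "?c1 \<and> ?c2 \<and> ?c3" by blast
next
  assume C: "?c1 \<and> ?c2 \<and> ?c3"
  show ?L
  proof
    fix k
    show "Ek n c0 g2 g3 A k = 0"
    proof (cases "n \<le> k")
      case True then show ?thesis using Ek_top dA cA by blast
    next
      case False
      obtain m where m: "n = Suc m" using n1 by (cases n) auto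
      show ?thesis
      proof (cases "k = m")
        case True
        then show ?thesis using Ek_n1[of A m c0 g2 g3] C dA cA m by simp
      next
        case False
        with \<open>\<not> n \<le> k\<close> m have "k < m" by simp
        then obtain m' where m': "n = Suc (Suc m')" using m by (cases m) auto
        show ?thesis
        proof (cases "k = m'")
          case True
          have h1: "coeff A (Suc m') = c0 / (2 * of_nat (Suc (Suc m')) - 1)" using C m' by simp
          have "coeff A m' =
                 ((8 * c0 ^ 2 - of_nat (Suc (Suc m')) * g2 * (2 * of_nat (Suc (Suc m')) - 1) ^ 2) * (of_nat (Suc (Suc m')) - 1))
                 / (8 * (2 * of_nat (Suc (Suc m')) - 3) * (2 * of_nat (Suc (Suc m')) - 1) ^ 2)"
            using C m' by simp
          then show ?thesis using Ek_n2[of A m' c0 g2 g3, OF _ _ h1] dA cA m' True by simp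
        next
          case False
          with \<open>k < m\<close> m m' have "k + 3 \<le> n" by simp
          then show ?thesis using Ek_rec[of k n c0 g2 g3 A] C by blast
        qed
      qed
    qed
  qed
qed

theorem theorem5:
  fixes n :: nat and c0 g2 g3 :: complex and A :: "complex poly"
  assumes "n \<ge> 1" and "degree A = n" and "coeff A n = 1"
  shows "((\<forall>p. lie_expr g2 g3 (potC n c0) A p = 0) \<longleftrightarrow>
           (coeff A (n - 1) = c0 / (2 * of_nat n - 1)
            \<and> (n \<ge> 2 \<longrightarrow> coeff A (n - 2) =
                 ((8 * c0 ^ 2 - of_nat n * g2 * (2 * of_nat n - 1) ^ 2) * (of_nat n - 1))
                 / (8 * (2 * of_nat n - 3) * (2 * of_nat n - 1) ^ 2))
            \<and> (\<forall>i. i + 3 \<le> n \<longrightarrow> coeff A i =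
                 (((2 * of_nat i ^ 2 + 10 * of_nat i + 12) * coeff A (i + 3) * g3
                   + (2 * of_nat i ^ 2 + 7 * of_nat i + 6) * coeff A (i + 2) * g2
                   - 8 * c0 * coeff A (i + 1)) * (of_nat i + 1))
                 / (4 * (of_nat i + of_nat n + 1) * (2 * of_nat i + 1) * (of_nat i - of_nat n)))))
       \<and> ((\<forall>p. lie_expr g2 g3 (potC n c0) A p = 0) \<longrightarrow>
           (\<forall>(S :: complex set) (wp :: complex \<Rightarrow> complex).
              open S \<and> wp holomorphic_on S
              \<and> (\<forall>x\<in>S. (deriv wp x) ^ 2 = 4 * wp x ^ 3 - g2 * wp x - g3)
              \<and> (\<forall>x\<in>S. deriv (deriv wp) x = 6 * wp x ^ 2 - g2 / 2)
              \<longrightarrow> (\<forall>x\<in>S.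
                    deriv (deriv (deriv (\<lambda>y. poly A (wp y)))) x
                    + 4 * poly (potC n c0) (wp x) * deriv (\<lambda>y. poly A (wp y)) x
                    + 2 * deriv (\<lambda>y. poly (potC n c0) (wp y)) x * poly A (wp x) = 0)))"
  
proof -
  have P: "(\<forall>p. lie_expr g2 g3 (potC n c0) A p = 0) \<longleftrightarrow> (\<forall>k. Ek n c0 g2 g3 A k = 0)"
    by (rule part1)
  show ?thesis
    apply (intro conjI)
     apply (rule trans[OF P part2[OF assms]])
    apply (intro impI allI ballI)
    apply (elim conjE)
    apply (rule part3)
         apply assumption+
    done
qed

end
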